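(* Fix an integer $n\ge 2$, a real number $0<p<1$, and $\xi>0$ as described in the context. Let $f(\mathbf{x})=x_1^p+\cdots+x_n^p$. Suppose $\mathbf{e}=(e_1,\ldots,e_n)\in\mathbb{R}^n$ satisfies $e_1+\cdots+e_n=n(n-1)$, $e_1^2+\cdots+e_n^2\le (n-1)^4+(n-1)$, $\prod_{i=1}^n e_i\ge (n-1)^2$, $e_i\le (n-1)^2$ for $i=1,\ldots,n$, $e_i\ge \xi$ for $i=1,\ldots,n$. Then $f(\mathbf{e})\ge (n-1)^{2p}+n-1$.
   Context: $\xi>0$ is a fixed number chosen such that whenever a point $\mathbf{x}$ with $x_j\le (n-1)^2$ for all $j$ has $x_i=\xi$ for some $i$, then $\prod_{j=1}^n x_j<(n-1)^2$. *)

theory Defs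
  imports Complex_Main
begin

definition fp :: "nat \<Rightarrow> real \<Rightarrow> (nat \<Rightarrow> real) \<Rightarrow> real" where
  "fp n p x = (\<Sum>i=1..n. x i powr p)"

end

theory Submission
  imports Defs "HOL-Analysis.Analysis"
begin


lemma L1:
  fixes p x :: real assumes "0 < p" "p < 1" "0 < x"
  shows "x powr p \<le> 1 - p + p * x"
  using Youngs_inequality_0[of p "1-p" x 1] assms by (simp add: algebra_simps)

lemma L2:
  fixes p x z :: real assumes "0 < p" "p < 1" "0 < x" "0 < z"
  shows "z powr p \<le> (1-p) * x powr p + p * (x powr p / x) * z"
proof -
  have "(z/x) powr p \<le> 1 - p + p * (z/x)" using L1[of p "z/x"] assms by simp
  hence "x powr p * (z/x) powr p \<le> x powr p * (1 - p + p * (z/x))"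
    by (intro mult_left_mono) auto
  moreover have "x powr p * (z/x) powr p = z powr p" using assms
    by (simp add: powr_divide)
  ultimately show ?thesis by (simp add: algebra_simps)
qed

lemma Dpos:
  fixes p M :: real assumes p: "0 < p" "p < 1" and M: "1 \<le> M"
  shows "p*(1-p)*(M - 1 - ln M) \<le> 1 + p*(M-1) - M powr p"
proof -
  define D where "D t = 1 + p*(t-1) - t powr p - p*(1-p)*(t - 1 - ln t)" for t :: real
  have "D 1 \<le> D M"
  proof (rule DERIV_nonneg_imp_nondecreasing[OF M])
    fix t :: real assume t: "1 \<le> t" "t \<le> M"
    have der: "DERIV D t :> p - p * (t powr p / t) - p*(1-p)*(1 - 1/t)"
      unfolding D_def using t
      by (auto intro!: derivative_eq_intros simp: field_simps powr_diff)
    have "(1/t) powr (1-p) \<le> 1 - (1-p) + (1-p)*(1/t)"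
      using L1[of "1-p" "1/t"] p t by simp
    moreover have "(1/t) powr (1-p) = t powr p / t" using t
      by (simp add: powr_divide powr_diff)
    ultimately have "t powr p / t \<le> p + (1-p)/t" by simp
    hence "0 \<le> p - p * (t powr p / t) - p*(1-p)*(1 - 1/t)"
    proof -
      assume h: "t powr p / t \<le> p + (1-p)/t"
      have "p * (t powr p / t) \<le> p * (p + (1-p)/t)" using h p by (intro mult_left_mono) auto
      thus ?thesis by (simp add: algebra_simps diff_divide_distrib)
    qed
    with der show "\<exists>y. DERIV D t :> y \<and> 0 \<le> y" by blast
  qed
  moreover have "D 1 = 0" by (simp add: D_def)
  ultimately show ?thesis by (simp add: D_def)
qed

lemma hpos:
  fixes p d M x :: real
  assumes p: "0 < p" "p < 1" and M: "1 < M" and d: "p*(1-p) \<le> d"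
    and HM: "M powr p - (1-p+d) - (p-d)*M - d*ln M = 0"
    and x: "0 < x" "x \<le> M"
  shows "x powr p - (1-p+d) - (p-d)*x - d*ln x \<ge> 0"
proof -
  define H where "H t = t powr p - (1-p+d) - (p-d)*t - d*ln t" for t :: real
  define k where "k t = p * t powr p - (p-d)*t - d" for t :: real
  have der: "DERIV H t :> k t / t" if "0 < t" for t
  proof -
    have "DERIV H t :> p*(t powr p / t) - (p-d) - d/t"
      unfolding H_def using that
      by (auto intro!: derivative_eq_intros simp: field_simps powr_diff)
    moreover have "p*(t powr p / t) - (p-d) - d/t = k t / t"
      unfolding k_def using that by (simp add: field_simps)
    ultimately show ?thesis by simp
  qed
  have H1: "H 1 = 0" by (simp add: H_def)
  have HM': "H M = 0" using HM by (simp add: H_def)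
  have k1: "k 1 = 0" by (simp add: k_def)
  have conc: "k t0 \<ge> 0" if t0: "1 \<le> t0" "t0 \<le> y" and ky: "k y \<ge> 0" for t0 y
  proof (cases "t0 = y")
    case True thus ?thesis using ky by simp
  next
    case False
    hence ty: "t0 < y" using t0 by simp
    define c where "c = p * (t0 powr p / t0)"
    have a1: "1 \<le> (1-p) * t0 powr p + c * 1"
      using L2[of p t0 1] p t0 unfolding c_def by simp
    have a2: "y powr p \<le> (1-p) * t0 powr p + c * y"
      using L2[of p t0 y] p t0 ty unfolding c_def by simp
    have ctp: "c * t0 = p * t0 powr p" unfolding c_def using t0 by simp
    have b1: "(y - t0) * 1 \<le> (y - t0) * ((1-p) * t0 powr p + c * 1)"
      using a1 ty by (intro mult_left_mono) auto
    have b2: "(t0 - 1) * y powr p \<le> (t0 - 1) * ((1-p) * t0 powr p + c * y)"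
      using a2 t0 by (intro mult_left_mono) auto
    have sum: "(y - t0) + (t0 - 1) * y powr p \<le> (y - 1) * t0 powr p"
    proof -
      have "(y - t0) * ((1-p) * t0 powr p + c * 1) + (t0 - 1) * ((1-p) * t0 powr p + c * y)
          = (y-1) * (1-p) * t0 powr p + c * t0 * (y - 1)"
        by (simp add: algebra_simps)
      also have "\<dots> = (y - 1) * t0 powr p" using ctp by (simp add: algebra_simps)
      finally show ?thesis using b1 b2 by simp
    qed
    have "(y - 1) * k t0 \<ge> (t0 - 1) * k y"
    proof -
      have "p * ((y - t0) + (t0 - 1) * y powr p) \<le> p * ((y - 1) * t0 powr p)"
        using sum p by (intro mult_left_mono) auto
      thus ?thesis unfolding k_def by (simp add: algebra_simps)
    qed
    moreover have "(t0 - 1) * k y \<ge> 0" using t0 ky by simp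
    ultimately have "(y - 1) * k t0 \<ge> 0" by linarith
    moreover have "y - 1 > 0" using t0 ty by simp
    ultimately show ?thesis by (simp add: zero_le_mult_iff)
  qed
  show ?thesis
  proof (cases "x \<le> 1")
    case True
    have "H 1 \<le> H x"
    proof (rule DERIV_nonpos_imp_nonincreasing[OF True])
      fix t :: real assume t: "x \<le> t" "t \<le> 1"
      hence tp: "0 < t" using x by simp
      have "t powr p \<le> 1 - p + p*t" using L1 p tp by simp
      hence "p * t powr p \<le> p * (1 - p + p*t)" using p by (intro mult_left_mono) auto
      moreover have "p*(1-p)*(1-t) \<le> d*(1-t)" using d t by (intro mult_right_mono) auto
      ultimately have "k t \<le> 0" unfolding k_def by (simp add: algebra_simps)
      hence "k t / t \<le> 0" using tp by (simp add: divide_nonpos_pos)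
      thus "\<exists>y. DERIV H t :> y \<and> y \<le> 0" using der tp by blast
    qed
    thus ?thesis using H1 by (simp add: H_def)
  next
    case False
    hence x1: "1 < x" by simp
    show ?thesis
    proof (cases "\<forall>t. 1 \<le> t \<and> t \<le> x \<longrightarrow> k t \<ge> 0")
      case True
      have "H 1 \<le> H x"
      proof (rule DERIV_nonneg_imp_nondecreasing[of 1 x H])
        show "1 \<le> x" using x1 by simp
      next
        fix t :: real assume t: "1 \<le> t" "t \<le> x"
        hence "k t / t \<ge> 0" using True by simp
        moreover have "DERIV H t :> k t / t" using der t by simp
        ultimately show "\<exists>y. DERIV H t :> y \<and> y \<ge> 0" by blast
      qed
      thus ?thesis using H1 by (simp add: H_def)
    next
      case False
      then obtain t0 where t0: "1 \<le> t0" "t0 \<le> x" "k t0 < 0" by auto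
      have "H M \<le> H x"
      proof (rule DERIV_nonpos_imp_nonincreasing[OF x(2)])
        fix t :: real assume t: "x \<le> t" "t \<le> M"
        have "k t < 0" using conc[of t0 t] t0 t x(2) by linarith
        hence "k t / t \<le> 0" using t x1 by (simp add: divide_nonpos_pos)
        moreover have "DERIV H t :> k t / t" using der t x1 by simp
        ultimately show "\<exists>y. DERIV H t :> y \<and> y \<le> 0" by blast
      qed
      thus ?thesis using HM' by (simp add: H_def)
    qed
  qed
qed


theorem theorem3p4:
  fixes n :: nat and p \<xi> :: real and e :: "nat \<Rightarrow> real"
  assumes n2: "n \<ge> 2"
    and p0: "0 < p" and p1: "p < 1"
    and xi_pos: "\<xi> > 0"
    and xi_prop: "\<And>x :: nat \<Rightarrow> real. (\<forall>j\<in>{1..n}. 0 < x j \<and> x j \<le> (real n - 1)^2) \<Longrightarrow>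
                    (\<exists>i\<in>{1..n}. x i = \<xi>) \<Longrightarrow> (\<Prod>j=1..n. x j) < (real n - 1)^2"
    and sum1: "(\<Sum>i=1..n. e i) = real n * (real n - 1)"
    and sum2: "(\<Sum>i=1..n. (e i)^2) \<le> (real n - 1)^4 + (real n - 1)"
    and prod: "(\<Prod>i=1..n. e i) \<ge> (real n - 1)^2"
    and upper: "\<forall>i\<in>{1..n}. e i \<le> (real n - 1)^2"
    and lower: "\<forall>i\<in>{1..n}. e i \<ge> \<xi>"
  shows "fp n p e \<ge> (real n - 1) powr (2 * p) + (real n - 1)"
proof (cases "n = 2")
  case True
  have u1: "e 1 \<le> 1" and u2: "e 2 \<le> 1" using upper True by auto
  have s: "e 1 + e 2 = 2" using sum1 True by (simp add: numeral_2_eq_2)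
  hence "e 1 = 1" "e 2 = 1" using u1 u2 by linarith+
  thus ?thesis using True by (simp add: fp_def numeral_2_eq_2)
next
  case False
  hence n3: "n \<ge> 3" using n2 by simp
  define m where "m = real n - 1"
  define M where "M = m^2"
  have m2: "m \<ge> 2" using n3 unfolding m_def by simp
  have "m*m \<ge> 2*2" using m2 by (intro mult_mono) auto
  hence M1: "M > 1" unfolding M_def by (simp add: power2_eq_square)
  have lnM: "ln M = 2 * ln m" unfolding M_def using m2 by (simp add: ln_realpow)
  have "ln m \<le> m - 1" using m2 by (intro ln_le_minus_one) simp
  moreover have "2*(m-1) < m^2 - 1"
  proof -
    have "(m-1)^2 > 0" using m2 by simp
    moreover have "m^2 - 1 - 2*(m-1) = (m-1)^2" by (simp add: power2_eq_square algebra_simps)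
    ultimately show ?thesis by linarith
  qed
  ultimately have Bpos: "M - 1 - ln M > 0" using lnM M_def by simp
  define A where "A = 1 + p*(M-1) - M powr p"
  define B where "B = M - 1 - ln M"
  define d where "d = A / B"
  have dB: "d * B = A" unfolding d_def using Bpos B_def by simp
  have "p*(1-p)*B \<le> A" unfolding A_def B_def using Dpos[of p M] p0 p1 M1 by simp
  hence dge: "p*(1-p) \<le> d" unfolding d_def using Bpos B_def by (simp add: pos_le_divide_eq)
  have HM: "M powr p - (1-p+d) - (p-d)*M - d*ln M = 0"
  proof -
    have "M powr p - (1-p+d) - (p-d)*M - d*ln M = d*B - A"
      unfolding A_def B_def by (simp add: algebra_simps)
    thus ?thesis using dB by simp
  qed
  have epos: "\<And>i. i \<in> {1..n} \<Longrightarrow> e i > 0" using lower xi_pos by force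
  have hi: "\<And>i. i \<in> {1..n} \<Longrightarrow> e i powr p - (1-p+d) - (p-d)*e i - d*ln (e i) \<ge> 0"
  proof -
    fix i assume i: "i \<in> {1..n}"
    show "e i powr p - (1-p+d) - (p-d)*e i - d*ln (e i) \<ge> 0"
      using hpos[of p M d "e i"] p0 p1 M1 dge HM epos[OF i] upper i unfolding M_def m_def by simp
  qed
  hence "0 \<le> (\<Sum>i=1..n. e i powr p - (1-p+d) - (p-d)*e i - d*ln (e i))"
    by (intro sum_nonneg) auto
  also have "\<dots> = fp n p e - real n * (1-p+d) - (p-d) * (\<Sum>i=1..n. e i) - d * (\<Sum>i=1..n. ln (e i))"
    by (simp add: fp_def sum_subtractf sum_distrib_left)
  finally have main: "fp n p e \<ge> real n * (1-p+d) + (p-d) * (\<Sum>i=1..n. e i) + d * (\<Sum>i=1..n. ln (e i))"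
    by simp
  have "(\<Sum>i=1..n. ln (e i)) = ln (\<Prod>i=1..n. e i)"
    using epos by (subst ln_prod) (auto, fastforce)
  also have "\<dots> \<ge> ln M" using prod M1 unfolding M_def m_def by (subst ln_le_cancel_iff) auto
  finally have lnsum: "(\<Sum>i=1..n. ln (e i)) \<ge> ln M" .
  have d0: "d \<ge> 0" using dge p0 p1 by (smt (verit) mult_pos_pos)
  have "d * ln M \<le> d * (\<Sum>i=1..n. ln (e i))" using lnsum d0 by (intro mult_left_mono) auto
  with main have main2: "fp n p e \<ge> real n * (1-p+d) + (p-d) * (real n * m) + d * ln M"
    using sum1 unfolding m_def by simp
  have rn: "real n = m + 1" unfolding m_def by simp
  have pw: "(real n - 1) powr (2 * p) = M powr p"
  proof -
    have "m powr (2*p) = (m powr 2) powr p" by (simp add: powr_powr)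
    also have "m powr 2 = m^2" using m2 by (simp add: powr_realpow[of m 2, simplified])
    finally show ?thesis unfolding M_def m_def .
  qed
  have "real n * (1-p+d) + (p-d) * (real n * m) + d * ln M = M powr p + m"
  proof -
    have "M powr p = (1-p+d) + (p-d)*M + d*ln M" using HM by simp
    thus ?thesis unfolding rn M_def by (simp add: algebra_simps power2_eq_square)
  qed
  thus ?thesis using main2 pw unfolding m_def by simp
qed

end
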